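(* With the notation of the context, suppose $A=1$. Then every $\alpha$-communal $k$-tuple can be written in exactly one way as a nonnegative integer linear combination $\sum_{i=1}^k c_i\mathbf{x}_i$ with $c_i\in\mathbb{Z}_{\ge 0}$; that is, $\mathbf{x}_1,\dots,\mathbf{x}_k$ freely generate the monoid of $\alpha$-communal $k$-tuples.
   Context: Let $k\ge 2$ and let $\alpha_1,\dots,\alpha_k$ be nonnegative rational numbers such that the sum of any $k-1$ of them is at most $1$ and $\sum_i\alpha_i>1$. A $k$-tuple $[g_1,\dots,g_k]$ of integers is called $\alpha$-communal if $0\le g_i\le \alpha_i\sum_{j=1}^k g_j$ for every $i$. Write $\alpha_i=m_i/n_i$ in lowest terms with $n_i\ge 1$. Set $N=\prod_{i=1}^k n_i$, $A=N(\sum_{i=1}^k\alpha_i-1)$, and $\hat\alpha_i=1-\sum_{j\ne i}\alpha_j$. For each $i$ define $\mathbf{x}_i=\frac{N}{n_i}[\alpha_1,\dots,\alpha_{i-1},\hat\alpha_i,\alpha_{i+1},\dots,\alpha_k]$, i.e. the $k$-tuple whose $j$-th entry is $\frac{N}{n_i}\alpha_j$ for $j\ne i$ and whose $i$-th entry is $\frac{N}{n_i}\hat\alpha_i$. *)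

theory Defs
  imports Complex_Main
begin

text \<open>Tuples are indexed by 0..<k. alpha i is a rational number.\<close>

definition communal :: "nat \<Rightarrow> (nat \<Rightarrow> rat) \<Rightarrow> (nat \<Rightarrow> int) \<Rightarrow> bool" where
  "communal k \<alpha> g \<longleftrightarrow>
     (\<forall>i<k. 0 \<le> g i \<and> of_int (g i) \<le> \<alpha> i * of_int (\<Sum>j<k. g j))"

text \<open>denominator n_i of alpha_i in lowest terms (positive)\<close>
definition den :: "rat \<Rightarrow> int" where
  "den q = snd (quotient_of q)"

definition bigN :: "nat \<Rightarrow> (nat \<Rightarrow> rat) \<Rightarrow> int" where
  "bigN k \<alpha> = (\<Prod>i<k. den (\<alpha> i))"

definition bigA :: "nat \<Rightarrow> (nat \<Rightarrow> rat) \<Rightarrow> rat" where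
  "bigA k \<alpha> = of_int (bigN k \<alpha>) * ((\<Sum>i<k. \<alpha> i) - 1)"

definition alpha_hat :: "nat \<Rightarrow> (nat \<Rightarrow> rat) \<Rightarrow> nat \<Rightarrow> rat" where
  "alpha_hat k \<alpha> i = 1 - (\<Sum>j\<in>{..<k} - {i}. \<alpha> j)"

text \<open>xvec k alpha i j = j-th entry of x_i\<close>
definition xvec :: "nat \<Rightarrow> (nat \<Rightarrow> rat) \<Rightarrow> nat \<Rightarrow> nat \<Rightarrow> rat" where
  "xvec k \<alpha> i j = (of_int (bigN k \<alpha>) / of_int (den (\<alpha> i))) *
      (if j = i then alpha_hat k \<alpha> i else \<alpha> j)"

end

theory Submission
  imports Defs
begin

definition num :: "rat \<Rightarrow> int" where "num q = fst (quotient_of q)"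

lemma den_pos: "den q > 0"
  unfolding den_def by (rule quotient_of_denom_pos')

lemma den_ne [simp]: "den q \<noteq> 0"
  using den_pos[of q] by simp

lemma num_den: "q * of_int (den q) = of_int (num q)"
proof -
  obtain n d where nd: "quotient_of q = (n, d)" by (cases "quotient_of q")
  have "d > 0" using quotient_of_denom_pos[OF nd] .
  moreover have "q = of_int n / of_int d" using quotient_of_div[OF nd] .
  ultimately show ?thesis unfolding den_def num_def nd by simp
qed

lemma bigN_pos: "bigN k \<alpha> > 0"
  unfolding bigN_def by (rule prod_pos) (simp add: den_pos)

lemma xvec_alt:
  assumes "i < k" and "of_int (bigN k \<alpha>) * ((\<Sum>l<k. \<alpha> l) - 1) = 1"
  shows "xvec k \<alpha> i j = (of_int (bigN k \<alpha>) / of_int (den (\<alpha> i))) * \<alpha> j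
           - (if j = i then 1 / of_int (den (\<alpha> i)) else 0)"
proof -
  define N where "N = (of_int (bigN k \<alpha>) :: rat)"
  define S where "S = (\<Sum>l<k. \<alpha> l)"
  define d where "d = (of_int (den (\<alpha> i)) :: rat)"
  have d0: "d > 0" unfolding d_def using den_pos by simp
  have NS: "N * (S - 1) = 1" using assms(2) unfolding N_def S_def .
  have ah: "alpha_hat k \<alpha> i = 1 - (S - \<alpha> i)"
    unfolding alpha_hat_def S_def using assms(1) by (simp add: sum_diff1)
  have "(N / d) * (1 - (S - \<alpha> i)) = (N/d) * \<alpha> i - (N * (S - 1)) / d"
    using d0 by (simp add: field_simps)
  also have "\<dots> = (N/d) * \<alpha> i - 1 / d" using NS by simp
  finally have "(N / d) * (1 - (S - \<alpha> i)) = (N/d) * \<alpha> i - 1 / d" .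
  then show ?thesis unfolding xvec_def ah
    by (fold N_def d_def) simp
qed

lemma lin:
  fixes c :: "nat \<Rightarrow> rat"
  assumes "j < k" and "of_int (bigN k \<alpha>) * ((\<Sum>l<k. \<alpha> l) - 1) = 1"
  shows "(\<Sum>i<k. c i * xvec k \<alpha> i j) =
     (\<Sum>i<k. c i * (of_int (bigN k \<alpha>) / of_int (den (\<alpha> i)))) * \<alpha> j
       - c j / of_int (den (\<alpha> j))"
proof -
  have "(\<Sum>i<k. c i * xvec k \<alpha> i j) = (\<Sum>i<k. c i * (of_int (bigN k \<alpha>) / of_int (den (\<alpha> i))) * \<alpha> j
       - (if j = i then c i / of_int (den (\<alpha> i)) else 0))"
    by (rule sum.cong) (auto simp: xvec_alt[OF _ assms(2)] algebra_simps)
  also have "\<dots> = (\<Sum>i<k. c i * (of_int (bigN k \<alpha>) / of_int (den (\<alpha> i)))) * \<alpha> j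
       - c j / of_int (den (\<alpha> j))"
    using assms(1) by (simp add: sum_subtractf sum_distrib_right)
  finally show ?thesis .
qed

lemma sumT:
  fixes c :: "nat \<Rightarrow> rat"
  assumes "of_int (bigN k \<alpha>) * ((\<Sum>l<k. \<alpha> l) - 1) = 1"
  defines "T \<equiv> (\<Sum>i<k. c i * (of_int (bigN k \<alpha>) / of_int (den (\<alpha> i))))"
  shows "(\<Sum>j<k. T * \<alpha> j - c j / of_int (den (\<alpha> j))) = T"
proof -
  define N where "N = (of_int (bigN k \<alpha>) :: rat)"
  define S where "S = (\<Sum>l<k. \<alpha> l)"
  have N0: "N > 0" unfolding N_def using bigN_pos by simp
  have NS: "N * (S - 1) = 1" using assms(1) unfolding N_def S_def .
  have "T = N * (\<Sum>j<k. c j / of_int (den (\<alpha> j)))"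
    unfolding T_def N_def by (simp add: sum_distrib_left field_simps)
  hence cs: "(\<Sum>j<k. c j / of_int (den (\<alpha> j))) = T / N" using N0 by (simp add: field_simps)
  have "(\<Sum>j<k. T * \<alpha> j - c j / of_int (den (\<alpha> j))) = T * S - T / N"
    unfolding S_def by (simp add: sum_subtractf sum_distrib_left cs)
  also have "\<dots> = T * (N * S - 1) / N" using N0 by (simp add: field_simps)
  also have "N * S - 1 = N" using NS by (simp add: algebra_simps)
  finally show ?thesis using N0 by simp
qed


lemma Ndiv:
  assumes "i < k"
  shows "(of_int (bigN k \<alpha>) :: rat) / of_int (den (\<alpha> i)) = of_int (\<Prod>l\<in>{..<k}-{i}. den (\<alpha> l))"
proof -
  have "bigN k \<alpha> = den (\<alpha> i) * (\<Prod>l\<in>{..<k}-{i}. den (\<alpha> l))"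
    unfolding bigN_def using assms by (simp add: prod.remove)
  then show ?thesis using den_pos[of "\<alpha> i"] by simp
qed

lemma Pint:
  fixes k :: nat
  assumes "i < k" "j < k" "j \<noteq> i"
  shows "(of_int (\<Prod>l\<in>{..<k}-{i}. den (\<alpha> l)) :: rat) * \<alpha> j \<in> \<int>"
proof -
  have "(\<Prod>l\<in>{..<k}-{i}. den (\<alpha> l)) = den (\<alpha> j) * (\<Prod>l\<in>{..<k}-{i}-{j}. den (\<alpha> l))"
    by (subst prod.remove[of "{..<k}-{i}" j]) (use assms in auto)
  hence "(of_int (\<Prod>l\<in>{..<k}-{i}. den (\<alpha> l)) :: rat) * \<alpha> j
      = of_int (\<Prod>l\<in>{..<k}-{i}-{j}. den (\<alpha> l)) * (\<alpha> j * of_int (den (\<alpha> j)))"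
    by (simp add: algebra_simps)
  also have "\<dots> = of_int ((\<Prod>l\<in>{..<k}-{i}-{j}. den (\<alpha> l)) * num (\<alpha> j))"
    by (simp add: num_den)
  finally show ?thesis by (metis Ints_of_int)
qed

lemma xvec_int:
  fixes k :: nat
  assumes "i < k" "j < k"
  shows "xvec k \<alpha> i j \<in> \<int>"
proof (cases "j = i")
  case True
  define P where "P = (of_int (\<Prod>l\<in>{..<k}-{i}. den (\<alpha> l)) :: rat)"
  have "xvec k \<alpha> i j = P - (\<Sum>l\<in>{..<k}-{i}. P * \<alpha> l)"
    unfolding xvec_def alpha_hat_def Ndiv[OF assms(1)] P_def[symmetric] using True
    by (simp add: sum_distrib_left algebra_simps)
  moreover have "(\<Sum>l\<in>{..<k}-{i}. P * \<alpha> l) \<in> \<int>"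
    unfolding P_def by (rule Ints_sum) (use assms Pint in auto)
  moreover have "P \<in> \<int>" unfolding P_def by (rule Ints_of_int)
  ultimately show ?thesis by simp
next
  case False
  then show ?thesis unfolding xvec_def Ndiv[OF assms(1)] using Pint[OF assms False] by simp
qed

theorem mainTheorem6:
  fixes k :: nat and \<alpha> :: "nat \<Rightarrow> rat"
  assumes "k \<ge> 2"
    and "\<forall>i<k. \<alpha> i \<ge> 0"
    and "\<forall>i<k. (\<Sum>j\<in>{..<k} - {i}. \<alpha> j) \<le> 1"
    and "(\<Sum>i<k. \<alpha> i) > 1"
    and "bigA k \<alpha> = 1"
  shows "(\<forall>g. communal k \<alpha> g \<longrightarrow>
            (\<exists>!c :: nat \<Rightarrow> nat. (\<forall>i\<ge>k. c i = 0) \<and>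
                (\<forall>j<k. of_int (g j) = (\<Sum>i<k. of_nat (c i) * xvec k \<alpha> i j))))
       \<and> (\<forall>c :: nat \<Rightarrow> nat. \<exists>g. communal k \<alpha> g \<and>
                (\<forall>j<k. of_int (g j) = (\<Sum>i<k. of_nat (c i) * xvec k \<alpha> i j)))"
proof (intro conjI allI impI)
  have NS: "of_int (bigN k \<alpha>) * ((\<Sum>l<k. \<alpha> l) - 1) = 1"
    using assms(5) unfolding bigA_def .
  define N where "N = (of_int (bigN k \<alpha>) :: rat)"
  define S where "S = (\<Sum>l<k. \<alpha> l)"
  have N0: "N > 0" unfolding N_def using bigN_pos by simp
  have NS': "N * (S - 1) = 1" using NS unfolding N_def S_def .
  have d0: "\<And>i. (of_int (den (\<alpha> i)) :: rat) > 0" using den_pos by simp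
  {
    fix g assume comm: "communal k \<alpha> g"
    define s where "s = (\<Sum>j<k. g j)"
    have key: "of_nat (c j) = of_int (den (\<alpha> j)) * (of_int s * \<alpha> j - of_int (g j))"
      if eqs: "\<forall>j<k. of_int (g j) = (\<Sum>i<k. of_nat (c i) * xvec k \<alpha> i j)" and j: "j < k"
      for c :: "nat \<Rightarrow> nat" and j
    proof -
      define T :: rat where "T = (\<Sum>i<k. of_nat (c i) * (of_int (bigN k \<alpha>) / of_int (den (\<alpha> i))))"
      have gj: "of_int (g l) = T * \<alpha> l - of_nat (c l) / of_int (den (\<alpha> l))" if "l < k" for l
        using eqs that lin[OF that NS, of "\<lambda>i. of_nat (c i)"] unfolding T_def by simp
      have "(of_int s :: rat) = (\<Sum>l<k. of_int (g l))" unfolding s_def by simp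
      also have "\<dots> = (\<Sum>l<k. T * \<alpha> l - of_nat (c l) / of_int (den (\<alpha> l)))"
        by (rule sum.cong) (auto simp: gj)
      also have "\<dots> = T" unfolding T_def by (rule sumT[OF NS])
      finally have "of_int s = T" .
      with gj[OF j] have "of_nat (c j) / of_int (den (\<alpha> j)) = of_int s * \<alpha> j - of_int (g j)"
        by simp
      then show ?thesis using d0[of j] by (simp add: field_simps)
    qed
    define c0 where "c0 j = (if j < k then nat (s * num (\<alpha> j) - den (\<alpha> j) * g j) else 0)" for j
    have c0v: "(of_nat (c0 j) :: rat) = of_int (den (\<alpha> j)) * (of_int s * \<alpha> j - of_int (g j))"
      if j: "j < k" for j
    proof -
      have "of_int (g j) \<le> \<alpha> j * of_int s" using comm j unfolding communal_def s_def by auto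
      hence "of_int (den (\<alpha> j)) * of_int (g j) \<le> of_int s * (\<alpha> j * of_int (den (\<alpha> j)))"
        using d0[of j] by (simp add: algebra_simps mult_left_mono)
      hence "(of_int (den (\<alpha> j) * g j) :: rat) \<le> of_int (s * num (\<alpha> j))"
        by (simp add: num_den)
      hence le: "den (\<alpha> j) * g j \<le> s * num (\<alpha> j)" by linarith
      have "(of_nat (c0 j) :: rat) = of_int (s * num (\<alpha> j) - den (\<alpha> j) * g j)"
        unfolding c0_def using j le by simp
      also have "\<dots> = of_int s * (\<alpha> j * of_int (den (\<alpha> j))) - of_int (den (\<alpha> j)) * of_int (g j)"
        by (simp add: num_den)
      finally show ?thesis by (simp add: algebra_simps)
    qed
    show "\<exists>!c :: nat \<Rightarrow> nat. (\<forall>i\<ge>k. c i = 0) \<and>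
                (\<forall>j<k. of_int (g j) = (\<Sum>i<k. of_nat (c i) * xvec k \<alpha> i j))"
    proof (rule ex1I[of _ c0])
      define T :: rat where "T = (\<Sum>i<k. of_nat (c0 i) * (of_int (bigN k \<alpha>) / of_int (den (\<alpha> i))))"
      have "T = (\<Sum>i<k. N * (of_int s * \<alpha> i - of_int (g i)))"
        unfolding T_def N_def by (rule sum.cong) (use d0 c0v in auto)
      also have "\<dots> = N * (of_int s * S - of_int s)"
      proof -
        have gs: "(\<Sum>i<k. N * (of_int (g i) :: rat)) = N * of_int s" by (simp add: s_def sum_distrib_left)
        show ?thesis unfolding S_def
          by (simp add: sum_distrib_left sum_subtractf right_diff_distrib gs mult.assoc)
      qed
      also have "\<dots> = of_int s * (N * (S - 1))" by (simp add: algebra_simps)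
      also have "\<dots> = of_int s" using NS' by simp
      finally have T: "T = of_int s" .
      show "(\<forall>i\<ge>k. c0 i = 0) \<and> (\<forall>j<k. of_int (g j) = (\<Sum>i<k. of_nat (c0 i) * xvec k \<alpha> i j))"
      proof (intro conjI allI impI)
        fix i assume "k \<le> i" thus "c0 i = 0" unfolding c0_def by simp
      next
        fix j assume j: "j < k"
        have "(\<Sum>i<k. of_nat (c0 i) * xvec k \<alpha> i j) = T * \<alpha> j - of_nat (c0 j) / of_int (den (\<alpha> j))"
          unfolding T_def using lin[OF j NS, of "\<lambda>i. of_nat (c0 i)"] by simp
        also have "\<dots> = of_int (g j)" using T c0v[OF j] d0[of j] by simp
        finally show "of_int (g j) = (\<Sum>i<k. of_nat (c0 i) * xvec k \<alpha> i j)" by simp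
      qed
    next
      fix c :: "nat \<Rightarrow> nat"
      assume H: "(\<forall>i\<ge>k. c i = 0) \<and> (\<forall>j<k. of_int (g j) = (\<Sum>i<k. of_nat (c i) * xvec k \<alpha> i j))"
      show "c = c0"
      proof
        fix j show "c j = c0 j"
        proof (cases "j < k")
          case True
          have "(of_nat (c j) :: rat) = of_nat (c0 j)" using key[of c j] H True c0v[OF True] by simp
          thus ?thesis by simp
        next
          case False thus ?thesis using H unfolding c0_def by simp
        qed
      qed
    qed
  }
  fix c :: "nat \<Rightarrow> nat"
  define X where "X j = (\<Sum>i<k. of_nat (c i) * xvec k \<alpha> i j)" for j
  define g where "g j = \<lfloor>X j\<rfloor>" for j
  have Xint: "X j \<in> \<int>" if "j < k" for j
    unfolding X_def by (rule Ints_sum) (use that xvec_int in auto)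
  have gX: "of_int (g j) = X j" if "j < k" for j
    using Xint[OF that] unfolding g_def by (metis Ints_cases floor_of_int)
  define T :: rat where "T = (\<Sum>i<k. of_nat (c i) * (of_int (bigN k \<alpha>) / of_int (den (\<alpha> i))))"
  have XT: "X j = T * \<alpha> j - of_nat (c j) / of_int (den (\<alpha> j))" if "j < k" for j
    unfolding X_def T_def using lin[OF that NS] .
  have sumX: "(\<Sum>j<k. X j) = T"
    using sumT[OF NS, of "\<lambda>i. of_nat (c i)"] unfolding T_def[symmetric]
    by (simp add: XT)
  have xnn: "xvec k \<alpha> i j \<ge> 0" if "i < k" "j < k" for i j
  proof -
    have "alpha_hat k \<alpha> i \<ge> 0" using assms(3) that(1) unfolding alpha_hat_def by simp
    moreover have "\<alpha> j \<ge> 0" using assms(2) that(2) by simp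
    moreover have "N / of_int (den (\<alpha> i)) \<ge> 0" using N0 d0[of i] by simp
    ultimately show ?thesis unfolding xvec_def N_def[symmetric] by (simp add: mult_nonneg_nonneg del: times_divide_eq_left)
  qed
  show "\<exists>g. communal k \<alpha> g \<and> (\<forall>j<k. of_int (g j) = (\<Sum>i<k. of_nat (c i) * xvec k \<alpha> i j))"
  proof (intro exI conjI)
    show "\<forall>j<k. of_int (g j) = (\<Sum>i<k. of_nat (c i) * xvec k \<alpha> i j)"
      using gX unfolding X_def by simp
    have sg: "(of_int (\<Sum>j<k. g j) :: rat) = T" using gX sumX by simp
    show "communal k \<alpha> g" unfolding communal_def
    proof (intro allI impI conjI)
      fix j assume j: "j < k"
      have "X j \<ge> 0" unfolding X_def by (rule sum_nonneg) (use xnn j in auto)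
      thus "0 \<le> g j" using gX[OF j] by simp
      have "of_nat (c j) / of_int (den (\<alpha> j)) \<ge> (0::rat)" using d0[of j] by simp
      hence "X j \<le> T * \<alpha> j" using XT[OF j] by simp
      thus "of_int (g j) \<le> \<alpha> j * of_int (\<Sum>j<k. g j)" using gX[OF j] sg by (simp add: mult.commute)
    qed
  qed
qed

end
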